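(* Let $(a_i)_{i\in\mathbb{Z}}$ and $(b_i)_{i\in\mathbb{Z}}$ be jointly stationary processes, with $a_i$ taking values in the positive integers and $b_i$ in a finite or countable alphabet, such that: (i) $(a_i)$ is i.i.d.; (ii) each $a_i$ is independent of the joint collection $\{a_j: j<i\}\cup\{b_j:j<i\}$; (iii) each $b_i$ is almost surely determined by $a_i,b_{i-1},b_{i-2},\dots,b_{i-a_i}$. Then $(b_i)_{i\in\mathbb{Z}}$ is a uniform martingale.
   Context: A stationary process $(X_i)_{i\in\mathbb{Z}}$ on a finite or countable alphabet is a uniform martingale if the conditional distribution of $X_0$ given $X_{-1},\dots,X_{-n}$ converges as $n\to\infty$ to the conditional distribution of $X_0$ given the entire past $X_{-1},X_{-2},\dots$ in total variation, uniformly over all pasts. *)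

theory Defs
  imports "HOL-Probability.Probability"
begin

text \<open>Sub-sigma-algebra of M generated by the random variables X j, j in J
  (X countable-valued, so generated by point preimages).\<close>
definition gen_algebra :: "'w measure \<Rightarrow> (int \<Rightarrow> 'w \<Rightarrow> 'b) \<Rightarrow> int set \<Rightarrow> 'w measure" where
  "gen_algebra M X J = sigma (space M) {X j -` {x} \<inter> space M | j x. j \<in> J}"

definition stationary :: "'w measure \<Rightarrow> (int \<Rightarrow> 'w \<Rightarrow> 'c) \<Rightarrow> bool" where
  "stationary M Z \<longleftrightarrow>
     (\<forall>i. Z i \<in> measurable M (count_space UNIV)) \<and>
     (\<forall>k::int. distr M (PiM UNIV (\<lambda>_. count_space UNIV)) (\<lambda>\<omega> i. Z (i + k) \<omega>)
              = distr M (PiM UNIV (\<lambda>_. count_space UNIV)) (\<lambda>\<omega> i. Z i \<omega>))"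

definition cond_prob0 :: "'w measure \<Rightarrow> (int \<Rightarrow> 'w \<Rightarrow> 'b) \<Rightarrow> int set \<Rightarrow> 'b \<Rightarrow> 'w \<Rightarrow> real" where
  "cond_prob0 M X J x = real_cond_exp M (gen_algebra M X J) (indicator {\<omega> \<in> space M. X 0 \<omega> = x})"

text \<open>Uniform martingale: a stationary process such that the total variation distance
  (here the l1 distance, i.e. twice the TV distance) between the conditional law of X 0
  given X (-1),...,X (-n) and the conditional law of X 0 given the whole past tends to
  zero uniformly over (almost) all pasts, i.e. in essential-supremum norm.\<close>
definition uniform_martingale :: "'w measure \<Rightarrow> (int \<Rightarrow> 'w \<Rightarrow> 'b::countable) \<Rightarrow> bool" where
  "uniform_martingale M X \<longleftrightarrow> stationary M X \<and>
     (\<forall>e>0. \<exists>N. \<forall>n\<ge>N. AE \<omega> in M.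
        (\<integral>\<^sup>+ x. ennreal \<bar>cond_prob0 M X {- int n..-1} x \<omega> - cond_prob0 M X {..-1} x \<omega>\<bar> \<partial>count_space UNIV)
          \<le> ennreal e)"

end

theory Submission
  imports Defs
begin


lemma gen_space: "space (gen_algebra M X J) = space M"
  unfolding gen_algebra_def by (simp add: space_measure_of_conv)

lemma gen_sets: "sets (gen_algebra M X J) = sigma_sets (space M) {X j -` {x} \<inter> space M | j x. j \<in> J}"
  unfolding gen_algebra_def by (rule sets_measure_of) auto

lemma gen_meas:
  fixes X :: "int \<Rightarrow> 'w \<Rightarrow> 'c::countable"
  assumes "j \<in> J" shows "X j \<in> measurable (gen_algebra M X J) (count_space UNIV)"
  unfolding measurable_count_space_eq2_countable gen_space gen_sets
  using assms by (auto intro!: sigma_sets.Basic)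

lemma gen_sub:
  fixes X :: "int \<Rightarrow> 'w \<Rightarrow> 'c::countable"
  assumes "\<And>j. j \<in> J \<Longrightarrow> X j \<in> measurable M (count_space UNIV)"
  shows "subalgebra M (gen_algebra M X J)"
  unfolding subalgebra_def gen_space gen_sets
proof (intro conjI refl sets.sigma_sets_subset)
  show "{X j -` {x} \<inter> space M |j x. j \<in> J} \<subseteq> sets M"
    using assms measurable_sets[of _ M "count_space UNIV"] by fastforce
qed

lemma gen_sfs:
  fixes X :: "int \<Rightarrow> 'w \<Rightarrow> 'c::countable"
  assumes "prob_space M" "\<And>j. j \<in> J \<Longrightarrow> X j \<in> measurable M (count_space UNIV)"
  shows "sigma_finite_subalgebra M (gen_algebra M X J)"
proof (rule finite_measure_subalgebra_is_sigma_finite)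
  interpret prob_space M by fact
  show "finite_measure_subalgebra M (gen_algebra M X J)"
    by (simp add: finite_measure_subalgebra_axioms_def finite_measure_subalgebra_def
        finite_measure_axioms gen_sub[OF assms(2)])
qed

lemma list_meas:
  fixes g :: "'i \<Rightarrow> 'w \<Rightarrow> 'c::countable"
  assumes "\<And>y. y \<in> set ys \<Longrightarrow> g y \<in> measurable N (count_space UNIV)"
  shows "(\<lambda>\<omega>. map (\<lambda>y. g y \<omega>) ys) \<in> measurable N (count_space UNIV)"
  using assms
proof (induction ys)
  case Nil then show ?case by simp
next
  case (Cons y ys)
  have 1: "g y \<in> measurable N (count_space UNIV)" using Cons by simp
  have 2: "(\<lambda>\<omega>. map (\<lambda>y. g y \<omega>) ys) \<in> measurable N (count_space UNIV)" using Cons by simp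
  show ?case unfolding measurable_count_space_eq2_countable
  proof (intro conjI ballI)
    fix L :: "'c list"
    show "(\<lambda>\<omega>. map (\<lambda>y. g y \<omega>) (y # ys)) -` {L} \<inter> space N \<in> sets N"
    proof (cases L)
      case Nil
      then have "(\<lambda>\<omega>. map (\<lambda>y. g y \<omega>) (y # ys)) -` {L} \<inter> space N = {}" by auto
      then show ?thesis by simp
    next
      case (Cons z zs)
      have "(\<lambda>\<omega>. map (\<lambda>y. g y \<omega>) (y # ys)) -` {L} \<inter> space N
          = (g y -` {z} \<inter> space N) \<inter> ((\<lambda>\<omega>. map (\<lambda>y. g y \<omega>) ys) -` {zs} \<inter> space N)"
        using Cons by auto
      moreover have "g y -` {z} \<inter> space N \<in> sets N" using 1 by (simp add: measurable_count_space_eq2_countable)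
      moreover have "(\<lambda>\<omega>. map (\<lambda>y. g y \<omega>) ys) -` {zs} \<inter> space N \<in> sets N" using 2 by (simp add: measurable_count_space_eq2_countable)
      ultimately show ?thesis by simp
    qed
  qed simp
qed

lemma count_bound:
  fixes h :: "'c::countable \<Rightarrow> ennreal"
  assumes "\<And>X. finite X \<Longrightarrow> sum h X \<le> c"
  shows "integral\<^sup>N (count_space UNIV) h \<le> c"
proof -
  define S where "S = range (to_nat :: 'c \<Rightarrow> nat)"
  define h' where "h' n = (if n \<in> S then h (inv to_nat n) else 0)" for n
  have h'_out: "h' n = 0" if "n \<notin> S" for n using that by (simp add: h'_def)
  have h'_in: "h' n = h (inv to_nat n)" if "n \<in> S" for n using that by (simp add: h'_def)
  have bij: "bij_betw to_nat (UNIV::'c set) S" unfolding S_def by (simp add: bij_betw_def)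
  have eq: "h' (to_nat x) = h x" for x :: 'c
  proof -
    have "to_nat x \<in> S" unfolding S_def by (rule rangeI)
    then have "h' (to_nat x) = h (inv to_nat (to_nat x))" by (rule h'_in)
    also have "inv to_nat (to_nat x) = x" by (rule inv_f_f[OF inj_to_nat])
    finally show ?thesis .
  qed
  have "integral\<^sup>N (count_space UNIV) h = (\<integral>\<^sup>+x. h' (to_nat (x::'c)) \<partial>count_space UNIV)"
    by (rule nn_integral_cong) (rule eq[symmetric])
  also have "\<dots> = (\<integral>\<^sup>+n. h' n \<partial>count_space S)" by (rule nn_integral_bij_count_space[OF bij])
  also have "\<dots> = (\<integral>\<^sup>+n. h' n \<partial>count_space UNIV)"
    by (rule nn_integral_count_space_eq) (simp_all add: h'_out)
  also have "\<dots> = (\<Sum>n. h' n)" by (rule nn_integral_count_space_nat)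
  also have "\<dots> \<le> c"
  proof (rule suminf_le_const)
    show "summable h'" by (rule summableI)
    fix m
    define T where "T = {..<m} \<inter> S"
    have "sum h' {..<m} = sum h' T"
      unfolding T_def by (rule sum.mono_neutral_right) (auto intro: h'_out)
    also have "\<dots> = sum (\<lambda>n. h (inv to_nat n)) T"
      by (rule sum.cong) (auto simp: T_def intro: h'_in)
    also have "\<dots> = sum h (inv to_nat ` T)"
    proof -
      have "inj_on (inv to_nat :: nat \<Rightarrow> 'c) T"
        by (rule inj_on_inv_into) (auto simp: T_def S_def)
      from sum.reindex[OF this, of h] show ?thesis by (simp add: comp_def)
    qed
    also have "\<dots> \<le> c" by (intro assms finite_imageI) (simp add: T_def)
    finally show "sum h' {..<m} \<le> c" .
  qed
  finally show ?thesis .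
qed

lemma stat_snd:
  fixes a :: "int \<Rightarrow> 'w \<Rightarrow> nat" and b :: "int \<Rightarrow> 'w \<Rightarrow> 'b"
  assumes st: "stationary M (\<lambda>i \<omega>. (a i \<omega>, b i \<omega>))"
  shows "stationary M b"
proof -
  have mab: "(\<lambda>\<omega>. (a i \<omega>, b i \<omega>)) \<in> measurable M (count_space UNIV)" for i
    using st unfolding stationary_def by blast
  have mb: "b i \<in> measurable M (count_space UNIV)" for i
    using measurable_compose[OF mab[of i], of snd "count_space UNIV"] by simp
  let ?P = "PiM (UNIV::int set) (\<lambda>_. count_space (UNIV :: (nat \<times> 'b) set))"
  let ?Q = "PiM (UNIV::int set) (\<lambda>_. count_space (UNIV :: 'b set))"
  have mPhi: "(\<lambda>z i. snd (z i)) \<in> measurable ?P ?Q"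
    by (rule measurable_PiM_single') (auto intro: measurable_compose[OF measurable_component_singleton])
  have mK: "(\<lambda>\<omega> i. (a (i + k) \<omega>, b (i + k) \<omega>)) \<in> measurable M ?P" for k
    by (rule measurable_PiM_single') (auto intro: mab)
  have mK0: "(\<lambda>\<omega> i. (a i \<omega>, b i \<omega>)) \<in> measurable M ?P"
    by (rule measurable_PiM_single') (auto intro: mab)
  have all: "\<forall>k::int. distr M ?P (\<lambda>\<omega> i. (a (i + k) \<omega>, b (i + k) \<omega>)) = distr M ?P (\<lambda>\<omega> i. (a i \<omega>, b i \<omega>))"
    using st unfolding stationary_def by (rule conjunct2)
  have "distr M ?Q (\<lambda>\<omega> i. b (i + k) \<omega>) = distr M ?Q (\<lambda>\<omega> i. b i \<omega>)" for k
  proof -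
    have e: "distr M ?P (\<lambda>\<omega> i. (a (i + k) \<omega>, b (i + k) \<omega>)) = distr M ?P (\<lambda>\<omega> i. (a i \<omega>, b i \<omega>))"
      using all by (rule spec)
    have "distr M ?Q (\<lambda>\<omega> i. b (i + k) \<omega>) = distr (distr M ?P (\<lambda>\<omega> i. (a (i + k) \<omega>, b (i + k) \<omega>))) ?Q (\<lambda>z i. snd (z i))"
      by (simp only: distr_distr[OF mPhi mK] o_def snd_conv)
    also have "\<dots> = distr (distr M ?P (\<lambda>\<omega> i. (a i \<omega>, b i \<omega>))) ?Q (\<lambda>z i. snd (z i))"
      by (simp only: e)
    also have "\<dots> = distr M ?Q (\<lambda>\<omega> i. b i \<omega>)"
      by (simp only: distr_distr[OF mPhi mK0] o_def snd_conv)
    finally show ?thesis .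
  qed
  then show ?thesis unfolding stationary_def using mb by blast
qed



locale S9 = prob_space M for M :: "'w measure" +
  fixes a :: "int \<Rightarrow> 'w \<Rightarrow> nat" and b :: "int \<Rightarrow> 'w \<Rightarrow> 'b::countable"
    and f0 :: "nat \<Rightarrow> 'b list \<Rightarrow> 'b"
  assumes ma: "\<And>i. a i \<in> measurable M (count_space UNIV)"
    and mb: "\<And>i. b i \<in> measurable M (count_space UNIV)"
    and ind0: "indep_set (sets (gen_algebra M a {0})) (sets (gen_algebra M (\<lambda>j \<omega>. (a j \<omega>, b j \<omega>)) {..<0}))"
    and det0: "AE \<omega> in M. b 0 \<omega> = f0 (a 0 \<omega>) (map (\<lambda>k. b (- int k) \<omega>) [1..<a 0 \<omega> + 1])"
begin

definition past :: "nat \<Rightarrow> 'w \<Rightarrow> 'b list" where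
  "past k \<omega> = map (\<lambda>j. b (- int j) \<omega>) [1..<k + 1]"
definition Sk :: "nat \<Rightarrow> 'b \<Rightarrow> 'w set" where
  "Sk k x = {\<omega> \<in> space M. f0 k (past k \<omega>) = x}"
definition Ak :: "nat \<Rightarrow> 'w set" where
  "Ak k = {\<omega> \<in> space M. a 0 \<omega> = k}"
definition R :: "nat \<Rightarrow> 'b \<Rightarrow> 'w set" where
  "R n x = {\<omega> \<in> space M. b 0 \<omega> = x \<and> n < a 0 \<omega>}"
definition Q :: "nat \<Rightarrow> 'w set" where
  "Q n = {\<omega> \<in> space M. n < a 0 \<omega>}"

lemma mab: "(\<lambda>\<omega>. (a j \<omega>, b j \<omega>)) \<in> measurable M (count_space UNIV)"
  unfolding measurable_count_space_eq2_countable
proof (intro conjI ballI)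
  fix z :: "nat \<times> 'b"
  have "(\<lambda>\<omega>. (a j \<omega>, b j \<omega>)) -` {z} \<inter> space M = (a j -` {fst z} \<inter> space M) \<inter> (b j -` {snd z} \<inter> space M)"
    by (cases z) auto
  moreover have "a j -` {fst z} \<inter> space M \<in> sets M" using ma[of j] by (simp add: measurable_count_space_eq2_countable)
  moreover have "b j -` {snd z} \<inter> space M \<in> sets M" using mb[of j] by (simp add: measurable_count_space_eq2_countable)
  ultimately show "(\<lambda>\<omega>. (a j \<omega>, b j \<omega>)) -` {z} \<inter> space M \<in> sets M" by simp
qed simp

lemma sfsb: "sigma_finite_subalgebra M (gen_algebra M b J)"
  by (rule gen_sfs) (auto intro: mb prob_space_axioms)

lemma subb: "subalgebra M (gen_algebra M b J)"
  by (rule gen_sub) (auto intro: mb)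

lemma suba: "subalgebra M (gen_algebra M a J)"
  by (rule gen_sub) (auto intro: ma)

lemma H_sub:
  assumes "J \<subseteq> {..<0}"
  shows "sets (gen_algebra M b J) \<subseteq> sets (gen_algebra M (\<lambda>j \<omega>. (a j \<omega>, b j \<omega>)) {..<0})"
  unfolding gen_sets[of M b] 
proof (rule sets.sigma_sets_subset')
  show "{b j -` {x} \<inter> space M |j x. j \<in> J} \<subseteq> sets (gen_algebra M (\<lambda>j \<omega>. (a j \<omega>, b j \<omega>)) {..<0})"
  proof clarify
    fix j x assume "j \<in> J"
    then have "j \<in> {..<0}" using assms by auto
    from measurable_compose[OF gen_meas[OF this, of "\<lambda>j \<omega>. (a j \<omega>, b j \<omega>)" M], of snd "count_space UNIV"]
    have "b j \<in> measurable (gen_algebra M (\<lambda>j \<omega>. (a j \<omega>, b j \<omega>)) {..<0}) (count_space UNIV)" by simp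
    then show "b j -` {x} \<inter> space M \<in> sets (gen_algebra M (\<lambda>j \<omega>. (a j \<omega>, b j \<omega>)) {..<0})"
      by (simp add: measurable_count_space_eq2_countable gen_space)
  qed
qed (use sets.top[of "gen_algebra M (\<lambda>j \<omega>. (a j \<omega>, b j \<omega>)) {..<0}"] in \<open>simp add: gen_space\<close>)

lemma space_eq: "space (gen_algebra M b J) = space M"
  by (simp add: gen_space)

lemma Ak_sets: "Ak k \<in> sets (gen_algebra M a {0})"
  using gen_meas[of 0 "{0}" a M] unfolding Ak_def
  by (simp add: measurable_count_space_eq2_countable gen_space vimage_def Int_def conj_commute)

lemma Q_sets: "Q n \<in> sets (gen_algebra M a {0})"
proof -
  have "a 0 -` {n<..} \<inter> space (gen_algebra M a {0}) \<in> sets (gen_algebra M a {0})"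
    by (rule measurable_sets[OF gen_meas]) auto
  moreover have "a 0 -` {n<..} \<inter> space (gen_algebra M a {0}) = Q n"
    unfolding Q_def gen_space by auto
  ultimately show ?thesis by simp
qed

lemma setsA0: "T \<in> sets (gen_algebra M a {0}) \<Longrightarrow> T \<in> sets M"
  using suba unfolding subalgebra_def by blast

lemma setsB: "S \<in> sets (gen_algebra M b J) \<Longrightarrow> S \<in> sets M"
  using subb unfolding subalgebra_def by blast

lemma ce_ind:
  assumes J: "J \<subseteq> {..<0}" and T: "T \<in> sets (gen_algebra M a {0})"
    and S: "S \<in> sets (gen_algebra M b J)"
  shows "AE \<omega> in M. real_cond_exp M (gen_algebra M b J) (indicator (T \<inter> S)) \<omega> = prob T * indicator S \<omega>"
proof -
  interpret G: sigma_finite_subalgebra M "gen_algebra M b J" by (rule sfsb)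
  have TM: "T \<in> sets M" using setsA0[OF T] .
  have SM: "S \<in> sets M" using setsB[OF S] .
  show ?thesis
  proof (rule G.real_cond_exp_charact)
    fix A assume A: "A \<in> sets (gen_algebra M b J)"
    have AS: "A \<inter> S \<in> sets (gen_algebra M b J)" using A S by auto
    have AM: "A \<in> sets M" using setsB[OF A] .
    have "(\<integral>x\<in>A. indicator (T \<inter> S) x \<partial>M) = (\<integral>x. indicator (T \<inter> (A \<inter> S)) x \<partial>M)"
      unfolding set_lebesgue_integral_def
      by (rule Bochner_Integration.integral_cong) (auto simp: indicator_def)
    also have "\<dots> = prob (T \<inter> (A \<inter> S))"
      using TM SM AM by simp
    also have "\<dots> = prob T * prob (A \<inter> S)"
      by (rule indep_setD[OF ind0 T]) (use H_sub[OF J] AS in auto)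
    also have "\<dots> = (\<integral>x. prob T * indicator (A \<inter> S) x \<partial>M)"
      using SM AM by simp
    also have "\<dots> = (\<integral>x\<in>A. prob T * indicator S x \<partial>M)"
      unfolding set_lebesgue_integral_def
      by (rule Bochner_Integration.integral_cong) (auto simp: indicator_def)
    finally show "(\<integral>x\<in>A. indicator (T \<inter> S) x \<partial>M) = (\<integral>x\<in>A. prob T * indicator S x \<partial>M)" .
  next
    show "integrable M (indicator (T \<inter> S) :: 'w \<Rightarrow> real)"
      using TM SM by (intro integrable_real_indicator) (auto simp: less_top[symmetric])
    show "integrable M (\<lambda>x. prob T * indicator S x)"
      using SM by (intro integrable_mult_right integrable_real_indicator) (auto simp: less_top[symmetric])
    show "(\<lambda>x. prob T * indicator S x) \<in> borel_measurable (gen_algebra M b J)"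
      using S by (intro borel_measurable_times borel_measurable_const borel_measurable_indicator)
  qed
qed

end


context S9 begin

lemma past_meas:
  assumes "\<And>j. 1 \<le> j \<Longrightarrow> j \<le> k \<Longrightarrow> - int j \<in> J"
  shows "past k \<in> measurable (gen_algebra M b J) (count_space UNIV)"
proof -
  have "(\<lambda>\<omega>. map (\<lambda>j. b (- int j) \<omega>) [1..<k + 1]) \<in> measurable (gen_algebra M b J) (count_space UNIV)"
    by (rule list_meas) (auto intro!: gen_meas assms)
  then show ?thesis unfolding past_def[abs_def] .
qed

lemma Sk_sets:
  assumes "\<And>j. 1 \<le> j \<Longrightarrow> j \<le> k \<Longrightarrow> - int j \<in> J"
  shows "Sk k x \<in> sets (gen_algebra M b J)"
proof -
  have "(\<lambda>\<omega>. f0 k (past k \<omega>)) \<in> measurable (gen_algebra M b J) (count_space UNIV)"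
    by (rule measurable_compose[OF past_meas[OF assms] measurable_count_space])
  then have "(\<lambda>\<omega>. f0 k (past k \<omega>)) -` {x} \<inter> space (gen_algebra M b J) \<in> sets (gen_algebra M b J)"
    by (simp add: measurable_count_space_eq2_countable)
  moreover have "(\<lambda>\<omega>. f0 k (past k \<omega>)) -` {x} \<inter> space (gen_algebra M b J) = Sk k x"
    unfolding Sk_def gen_space by auto
  ultimately show ?thesis by simp
qed

lemma Sk_M: "Sk k x \<in> sets M"
  using setsB[OF Sk_sets[of k UNIV]] by simp

lemma Ak_M: "Ak k \<in> sets M" using setsA0[OF Ak_sets] .

lemma R_M: "R n x \<in> sets M"
proof -
  have "R n x = (b 0 -` {x} \<inter> space M) \<inter> Q n" unfolding R_def Q_def by auto
  moreover have "b 0 -` {x} \<inter> space M \<in> sets M" using mb[of 0] by (simp add: measurable_count_space_eq2_countable)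
  ultimately show ?thesis using setsA0[OF Q_sets] by simp
qed

lemma B_M: "{\<omega> \<in> space M. b 0 \<omega> = x} \<in> sets M"
proof -
  have "{\<omega> \<in> space M. b 0 \<omega> = x} = b 0 -` {x} \<inter> space M" by auto
  then show ?thesis using mb[of 0] by (simp add: measurable_count_space_eq2_countable)
qed

lemma decomp:
  "AE \<omega> in M. indicator {\<omega> \<in> space M. b 0 \<omega> = x} \<omega>
     = (\<Sum>k\<in>{..n}. indicator (Ak k \<inter> Sk k x) \<omega>) + (indicator (R n x) \<omega> :: real)"
proof (rule AE_mp[OF det0], rule AE_I2, rule impI)
  fix \<omega> assume \<omega>: "\<omega> \<in> space M" and d: "b 0 \<omega> = f0 (a 0 \<omega>) (map (\<lambda>k. b (- int k) \<omega>) [1..<a 0 \<omega> + 1])"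
  have d': "b 0 \<omega> = f0 (a 0 \<omega>) (past (a 0 \<omega>) \<omega>)" using d unfolding past_def .
  have sum_eq: "(\<Sum>k\<in>{..n}. indicator (Ak k \<inter> Sk k x) \<omega> :: real)
      = (\<Sum>k\<in>{..n}. if k = a 0 \<omega> then (if f0 (a 0 \<omega>) (past (a 0 \<omega>) \<omega>) = x then 1 else 0) else 0)"
    by (rule sum.cong) (auto simp: indicator_def Ak_def Sk_def \<omega>)
  show "indicator {\<omega> \<in> space M. b 0 \<omega> = x} \<omega>
     = (\<Sum>k\<in>{..n}. indicator (Ak k \<inter> Sk k x) \<omega>) + (indicator (R n x) \<omega> :: real)"
  proof (cases "a 0 \<omega> \<le> n")
    case True
    then show ?thesis unfolding sum_eq using d' \<omega> by (simp add: indicator_def R_def)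
  next
    case False
    then show ?thesis unfolding sum_eq using d' \<omega> by (simp add: indicator_def R_def)
  qed
qed

lemma main_repr:
  assumes J1: "{- int n..-1} \<subseteq> J" and J2: "J \<subseteq> {..<0}"
  shows "AE \<omega> in M. cond_prob0 M b J x \<omega>
     = (\<Sum>k\<in>{..n}. prob (Ak k) * indicator (Sk k x) \<omega>) + real_cond_exp M (gen_algebra M b J) (indicator (R n x)) \<omega>"
proof -
  interpret G: sigma_finite_subalgebra M "gen_algebra M b J" by (rule sfsb)
  let ?G = "gen_algebra M b J"
  have int_AS: "integrable M (indicator (Ak k \<inter> Sk k x) :: 'w \<Rightarrow> real)" for k
    using Ak_M Sk_M by (intro integrable_real_indicator) (auto simp: less_top[symmetric])
  have int_R: "integrable M (indicator (R n x) :: 'w \<Rightarrow> real)"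
    using R_M by (intro integrable_real_indicator) (auto simp: less_top[symmetric])
  have 1: "AE \<omega> in M. real_cond_exp M ?G (indicator {\<omega> \<in> space M. b 0 \<omega> = x}) \<omega>
      = real_cond_exp M ?G (\<lambda>\<omega>. (\<Sum>k\<in>{..n}. indicator (Ak k \<inter> Sk k x) \<omega>) + (indicator (R n x) \<omega> :: real)) \<omega>"
    by (rule G.real_cond_exp_cong[OF decomp]) (use B_M Ak_M Sk_M R_M in auto)
  have 2: "AE \<omega> in M. real_cond_exp M ?G (\<lambda>\<omega>. (\<Sum>k\<in>{..n}. indicator (Ak k \<inter> Sk k x) \<omega>) + (indicator (R n x) \<omega> :: real)) \<omega>
      = real_cond_exp M ?G (\<lambda>\<omega>. (\<Sum>k\<in>{..n}. indicator (Ak k \<inter> Sk k x) \<omega> :: real)) \<omega> + real_cond_exp M ?G (indicator (R n x)) \<omega>"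
    using G.real_cond_exp_add[of "\<lambda>\<omega>. (\<Sum>k\<in>{..n}. indicator (Ak k \<inter> Sk k x) \<omega> :: real)" "indicator (R n x)"]
      int_AS int_R by auto
  have 3: "AE \<omega> in M. real_cond_exp M ?G (\<lambda>\<omega>. (\<Sum>k\<in>{..n}. indicator (Ak k \<inter> Sk k x) \<omega> :: real)) \<omega>
      = (\<Sum>k\<in>{..n}. real_cond_exp M ?G (indicator (Ak k \<inter> Sk k x)) \<omega>)"
    by (rule G.real_cond_exp_sum) (rule int_AS)
  have 4: "AE \<omega> in M. \<forall>k\<in>{..n}. real_cond_exp M ?G (indicator (Ak k \<inter> Sk k x)) \<omega> = prob (Ak k) * indicator (Sk k x) \<omega>"
  proof (subst AE_finite_all, simp, intro ballI)
    fix k assume "k \<in> {..n}"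
    then have "Sk k x \<in> sets ?G" using J1 by (intro Sk_sets) auto
    then show "AE \<omega> in M. real_cond_exp M ?G (indicator (Ak k \<inter> Sk k x)) \<omega> = prob (Ak k) * indicator (Sk k x) \<omega>"
      by (rule ce_ind[OF J2 Ak_sets])
  qed
  have 5: "AE \<omega> in M. (\<Sum>k\<in>{..n}. real_cond_exp M ?G (indicator (Ak k \<inter> Sk k x)) \<omega>) = (\<Sum>k\<in>{..n}. prob (Ak k) * indicator (Sk k x) \<omega>)"
    using 4 by eventually_elim (intro sum.cong refl, blast)
  show ?thesis
    using 1 2 3 5 unfolding cond_prob0_def
  proof eventually_elim
    case (elim \<omega>)
    show ?case by (simp only: elim)
  qed
qed

lemma R_bound:
  assumes J2: "J \<subseteq> {..<0}" and X: "finite X"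
  shows "AE \<omega> in M. (\<Sum>x\<in>X. real_cond_exp M (gen_algebra M b J) (indicator (R n x)) \<omega>) \<le> prob (Q n)"
proof -
  interpret G: sigma_finite_subalgebra M "gen_algebra M b J" by (rule sfsb)
  let ?G = "gen_algebra M b J"
  have int_R: "integrable M (indicator (R n x) :: 'w \<Rightarrow> real)" for x
    using R_M by (intro integrable_real_indicator) (auto simp: less_top[symmetric])
  have int_Q: "integrable M (indicator (Q n) :: 'w \<Rightarrow> real)"
    using setsA0[OF Q_sets] by (intro integrable_real_indicator) (auto simp: less_top[symmetric])
  have 1: "AE \<omega> in M. real_cond_exp M ?G (\<lambda>\<omega>. \<Sum>x\<in>X. indicator (R n x) \<omega> :: real) \<omega>
      = (\<Sum>x\<in>X. real_cond_exp M ?G (indicator (R n x)) \<omega>)"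
    by (rule G.real_cond_exp_sum) (rule int_R)
  have le: "(\<Sum>x\<in>X. indicator (R n x) \<omega> :: real) \<le> indicator (Q n) \<omega>" for \<omega>
  proof -
    have "(\<Sum>x\<in>X. indicator (R n x) \<omega> :: real) = (\<Sum>x\<in>X. if x = b 0 \<omega> then indicator (Q n) \<omega> else 0)"
      by (rule sum.cong) (auto simp: indicator_def R_def Q_def)
    also have "\<dots> \<le> indicator (Q n) \<omega>"
      using X by (simp add: sum.delta')
    finally show ?thesis .
  qed
  have 2: "AE \<omega> in M. real_cond_exp M ?G (\<lambda>\<omega>. \<Sum>x\<in>X. indicator (R n x) \<omega> :: real) \<omega>
      \<le> real_cond_exp M ?G (indicator (Q n)) \<omega>"
    by (rule G.real_cond_exp_mono) (use le int_R int_Q in auto)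
  have 3: "AE \<omega> in M. real_cond_exp M ?G (indicator (Q n \<inter> space M)) \<omega> = prob (Q n) * indicator (space M) \<omega>"
    by (rule ce_ind[OF J2 Q_sets]) (metis sets.top space_eq)
  have QS: "Q n \<inter> space M = Q n" unfolding Q_def by auto
  show ?thesis using 1 2 3 AE_space unfolding QS
  proof eventually_elim
    case (elim \<omega>)
    from elim(4) have "prob (Q n) * indicator (space M) \<omega> = prob (Q n)" by simp
    with elim(1,2,3) show ?case by simp
  qed
qed

lemma R_pos: "AE \<omega> in M. 0 \<le> real_cond_exp M (gen_algebra M b J) (indicator (R n x)) \<omega>"
proof -
  interpret G: sigma_finite_subalgebra M "gen_algebra M b J" by (rule sfsb)
  show ?thesis by (rule G.real_cond_exp_pos) (use R_M in auto)
qed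

end


context S9 begin

lemma Q_lim: "(\<lambda>n. prob (Q n)) \<longlonglongrightarrow> 0"
proof -
  have "(\<lambda>n. prob (Q n)) \<longlonglongrightarrow> prob (\<Inter> (range Q))"
  proof (rule finite_Lim_measure_decseq)
    show "range Q \<subseteq> events" using setsA0[OF Q_sets] by auto
    show "decseq Q" unfolding decseq_def Q_def by auto
  qed
  moreover have "\<Inter> (range Q) = {}"
  proof safe
    fix \<omega> assume "\<omega> \<in> \<Inter> (range Q)"
    then have "\<omega> \<in> Q (a 0 \<omega>)" by auto
    then show "\<omega> \<in> {}" unfolding Q_def by auto
  qed
  ultimately show ?thesis by simp
qed

lemma bound_n:
  "AE \<omega> in M. (\<integral>\<^sup>+ x. ennreal \<bar>cond_prob0 M b {- int n..-1} x \<omega> - cond_prob0 M b {..-1} x \<omega>\<bar> \<partial>count_space UNIV)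
      \<le> ennreal (2 * prob (Q n))"
proof -
  define u where "u x \<omega> = real_cond_exp M (gen_algebra M b {- int n..-1}) (indicator (R n x)) \<omega>" for x \<omega>
  define v where "v x \<omega> = real_cond_exp M (gen_algebra M b {..-1}) (indicator (R n x)) \<omega>" for x \<omega>
  let ?q = "prob (Q n)"
  have A1: "AE \<omega> in M. \<forall>x. cond_prob0 M b {- int n..-1} x \<omega> - cond_prob0 M b {..-1} x \<omega> = u x \<omega> - v x \<omega>"
  proof (subst AE_all_countable, intro allI)
    fix x
    have r1: "AE \<omega> in M. cond_prob0 M b {- int n..-1} x \<omega>
     = (\<Sum>k\<in>{..n}. prob (Ak k) * indicator (Sk k x) \<omega>) + u x \<omega>"
      unfolding u_def by (rule main_repr) auto
    have r2: "AE \<omega> in M. cond_prob0 M b {..-1} x \<omega>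
     = (\<Sum>k\<in>{..n}. prob (Ak k) * indicator (Sk k x) \<omega>) + v x \<omega>"
      unfolding v_def by (rule main_repr) auto
    show "AE \<omega> in M. cond_prob0 M b {- int n..-1} x \<omega> - cond_prob0 M b {..-1} x \<omega> = u x \<omega> - v x \<omega>"
      using r1 r2 by eventually_elim simp
  qed
  have A2: "AE \<omega> in M. \<forall>x. 0 \<le> u x \<omega> \<and> 0 \<le> v x \<omega>"
    unfolding u_def v_def by (subst AE_all_countable) (auto intro: R_pos)
  have A3: "AE \<omega> in M. \<forall>X\<in>Collect finite. (\<Sum>x\<in>X. u x \<omega>) \<le> ?q \<and> (\<Sum>x\<in>X. v x \<omega>) \<le> ?q"
  proof (rule AE_ball_countable')
    fix X :: "'b set" assume "X \<in> Collect finite"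
    then have X: "finite X" by simp
    have "AE \<omega> in M. (\<Sum>x\<in>X. u x \<omega>) \<le> ?q" unfolding u_def by (rule R_bound[OF _ X]) auto
    moreover have "AE \<omega> in M. (\<Sum>x\<in>X. v x \<omega>) \<le> ?q" unfolding v_def by (rule R_bound[OF _ X]) auto
    ultimately show "AE \<omega> in M. (\<Sum>x\<in>X. u x \<omega>) \<le> ?q \<and> (\<Sum>x\<in>X. v x \<omega>) \<le> ?q" by eventually_elim simp
  qed (rule countable_Collect_finite)
  show ?thesis using A1 A2 A3
  proof eventually_elim
    case (elim \<omega>)
    have "(\<integral>\<^sup>+ x. ennreal \<bar>cond_prob0 M b {- int n..-1} x \<omega> - cond_prob0 M b {..-1} x \<omega>\<bar> \<partial>count_space UNIV)
        = (\<integral>\<^sup>+ x. ennreal \<bar>u x \<omega> - v x \<omega>\<bar> \<partial>count_space UNIV)"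
      using elim(1) by simp
    also have "\<dots> \<le> (\<integral>\<^sup>+ x. ennreal (u x \<omega>) + ennreal (v x \<omega>) \<partial>count_space UNIV)"
    proof (rule nn_integral_mono)
      fix x
      have "\<bar>u x \<omega> - v x \<omega>\<bar> \<le> u x \<omega> + v x \<omega>" using elim(2) by (auto simp: abs_if)
      then have "ennreal \<bar>u x \<omega> - v x \<omega>\<bar> \<le> ennreal (u x \<omega> + v x \<omega>)" by (rule ennreal_leI)
      also have "\<dots> = ennreal (u x \<omega>) + ennreal (v x \<omega>)" using elim(2) by (simp add: ennreal_plus)
      finally show "ennreal \<bar>u x \<omega> - v x \<omega>\<bar> \<le> ennreal (u x \<omega>) + ennreal (v x \<omega>)" .
    qed
    also have "\<dots> = (\<integral>\<^sup>+ x. ennreal (u x \<omega>) \<partial>count_space UNIV) + (\<integral>\<^sup>+ x. ennreal (v x \<omega>) \<partial>count_space UNIV)"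
      by (rule nn_integral_add) auto
    also have "\<dots> \<le> ennreal ?q + ennreal ?q"
    proof (rule add_mono)
      show "(\<integral>\<^sup>+ x. ennreal (u x \<omega>) \<partial>count_space UNIV) \<le> ennreal ?q"
      proof (rule count_bound)
        fix X :: "'b set" assume "finite X"
        then have "(\<Sum>x\<in>X. u x \<omega>) \<le> ?q" using elim(3) by auto
        then show "(\<Sum>x\<in>X. ennreal (u x \<omega>)) \<le> ennreal ?q"
          using elim(2) by (simp add: sum_ennreal ennreal_leI)
      qed
      show "(\<integral>\<^sup>+ x. ennreal (v x \<omega>) \<partial>count_space UNIV) \<le> ennreal ?q"
      proof (rule count_bound)
        fix X :: "'b set" assume "finite X"
        then have "(\<Sum>x\<in>X. v x \<omega>) \<le> ?q" using elim(3) by auto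
        then show "(\<Sum>x\<in>X. ennreal (v x \<omega>)) \<le> ennreal ?q"
          using elim(2) by (simp add: sum_ennreal ennreal_leI)
      qed
    qed
    also have "\<dots> = ennreal (2 * ?q)"
    proof -
      have "ennreal (?q + ?q) = ennreal ?q + ennreal ?q" by (rule ennreal_plus) auto
      then show ?thesis by (simp only: mult_2)
    qed
    finally show ?case .
  qed
qed

lemma unif:
  "\<forall>e>0. \<exists>N. \<forall>n\<ge>N. AE \<omega> in M.
        (\<integral>\<^sup>+ x. ennreal \<bar>cond_prob0 M b {- int n..-1} x \<omega> - cond_prob0 M b {..-1} x \<omega>\<bar> \<partial>count_space UNIV)
          \<le> ennreal e"
proof (intro allI impI)
  fix e :: real assume e: "e > 0"
  then obtain N where N: "\<And>n. n \<ge> N \<Longrightarrow> norm (prob (Q n) - 0) < e / 2"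
    using LIMSEQ_D[OF Q_lim, of "e/2"] by auto
  show "\<exists>N. \<forall>n\<ge>N. AE \<omega> in M.
        (\<integral>\<^sup>+ x. ennreal \<bar>cond_prob0 M b {- int n..-1} x \<omega> - cond_prob0 M b {..-1} x \<omega>\<bar> \<partial>count_space UNIV)
          \<le> ennreal e"
  proof (intro exI allI impI)
    fix n assume "N \<le> n"
    then have "2 * prob (Q n) \<le> e" using N[of n] by simp
    then have le: "ennreal (2 * prob (Q n)) \<le> ennreal e" by (rule ennreal_leI)
    show "AE \<omega> in M.
        (\<integral>\<^sup>+ x. ennreal \<bar>cond_prob0 M b {- int n..-1} x \<omega> - cond_prob0 M b {..-1} x \<omega>\<bar> \<partial>count_space UNIV)
          \<le> ennreal e"
      using bound_n[of n] by eventually_elim (rule order_trans[OF _ le])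
  qed
qed

end

theorem mainTheorem9:
  fixes M :: "'w measure"
    and a :: "int \<Rightarrow> 'w \<Rightarrow> nat"
    and b :: "int \<Rightarrow> 'w \<Rightarrow> 'b::countable"
  assumes P: "prob_space M"
    and pos: "\<And>i \<omega>. \<omega> \<in> space M \<Longrightarrow> a i \<omega> \<ge> 1"
    and joint_stat: "stationary M (\<lambda>i \<omega>. (a i \<omega>, b i \<omega>))"
    and iid_indep: "prob_space.indep_vars M (\<lambda>_. count_space UNIV) a UNIV"
    and iid_ident: "\<And>i. distr M (count_space UNIV) (a i) = distr M (count_space UNIV) (a 0)"
    and indep_past: "\<And>i. prob_space.indep_set M
              (sets (gen_algebra M a {i}))
              (sets (gen_algebra M (\<lambda>j \<omega>. (a j \<omega>, b j \<omega>)) {..<i}))"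
    and determined: "\<And>i. \<exists>f :: nat \<Rightarrow> 'b list \<Rightarrow> 'b.
              AE \<omega> in M. b i \<omega> = f (a i \<omega>) (map (\<lambda>k. b (i - int k) \<omega>) [1..<a i \<omega> + 1])"
  shows "uniform_martingale M b"
proof -
  obtain f0 where f0: "AE \<omega> in M. b 0 \<omega> = f0 (a 0 \<omega>) (map (\<lambda>k. b (0 - int k) \<omega>) [1..<a 0 \<omega> + 1])"
    using determined[of 0] by blast
  have det0: "AE \<omega> in M. b 0 \<omega> = f0 (a 0 \<omega>) (map (\<lambda>k. b (- int k) \<omega>) [1..<a 0 \<omega> + 1])"
    using f0 by (simp only: diff_0)
  have mab: "(\<lambda>\<omega>. (a i \<omega>, b i \<omega>)) \<in> measurable M (count_space UNIV)" for i
    using joint_stat unfolding stationary_def by blast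
  have ma: "a i \<in> measurable M (count_space UNIV)" for i
    using measurable_compose[OF mab[of i], of fst "count_space UNIV"] by simp
  have mb: "b i \<in> measurable M (count_space UNIV)" for i
    using measurable_compose[OF mab[of i], of snd "count_space UNIV"] by simp
  interpret S9 M a b f0
    by (intro S9.intro S9_axioms.intro P ma mb indep_past det0)
  show ?thesis unfolding uniform_martingale_def using stat_snd[OF joint_stat] unif by blast
qed

end
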